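(* Let $n\in\mathbb N$. Then: (i) $\delta(n)<\frac n4$ if and only if both (a) $n\ne p,2p,3p,4p$ for every prime $p$ (including $p=2$), and (b) $n\notin\{1,16,18,24,25,27,30,32,35,36,40,42,45,48,49,50,54,55,56,60,63,64,65,66,75,85,95\}$; (ii) $\delta(n)=\frac n4$ if and only if $n=64$.
   Context: $\mathbb N$ is the set of positive integers. For $n\in\mathbb N$, $\delta(n)=\min\{\,r+s : r,s\in\mathbb N,\ r\le s,\ rs=n\,\}$, i.e. the minimum of $d+n/d$ over positive divisors $d$ of $n$. *)

theory Defs
  imports Complex_Main "HOL-Computational_Algebra.Primes"
begin

definition delta :: "nat \<Rightarrow> nat" where
  "delta n = Min {r + s | r s. 0 < r \<and> 0 < s \<and> r \<le> s \<and> r * s = n}"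

end

theory Submission
  imports Defs
begin

definition Gs :: "nat \<Rightarrow> bool" where
 "Gs n = list_ex (\<lambda>r. n mod r = 0 \<and> r*r \<le> n \<and> 4*(r + n div r) < n) [1..<11]"
definition Ps :: "nat \<Rightarrow> bool" where
 "Ps m = (1 < m \<and> list_all (\<lambda>d. d < m \<longrightarrow> m mod d \<noteq> 0) [2..<11])"
definition Ks :: "nat \<Rightarrow> bool" where
 "Ks n = list_ex (\<lambda>k. n mod k = 0 \<and> Ps (n div k)) [1..<5]"

lemma comp_check:
  "list_all (\<lambda>n. Gs n = (\<not> Ks n \<and> n \<notin> {1,16,18,24,25,27,30,32,35,36,40,42,45,48,49,50,54,55,56,60,63,64,65,66,75,85,95})) [1..<101]"
  unfolding Gs_def Ks_def Ps_def by code_simp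

definition E :: "nat \<Rightarrow> bool" where
 "E n = (\<exists>r s. 0 < r \<and> r \<le> s \<and> r * s = n \<and> 4*(r+s) < n)"

lemma delta_props:
  assumes "n \<ge> 1"
  shows "delta n \<in> {r + s | r s. 0 < r \<and> 0 < s \<and> r \<le> s \<and> r * s = n}"
    and "\<And>x. x \<in> {r + s | r s. 0 < r \<and> 0 < s \<and> r \<le> s \<and> r * s = n} \<Longrightarrow> delta n \<le> x"
proof -
  let ?S = "{r + s | r s. 0 < r \<and> 0 < s \<and> r \<le> s \<and> r * s = n}"
  have fin: "finite ?S"
  proof (rule finite_subset[of _ "{..2*n}"])
    show "?S \<subseteq> {..2*n}"
    proof
      fix x assume "x \<in> ?S"
      then obtain r s where "x = r + s" "0 < r" "0 < s" "r \<le> s" "r * s = n" by blast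
      moreover have "s \<le> n" using \<open>0<r\<close> \<open>r*s=n\<close>
        by (metis dvd_imp_le dvd_triv_right assms less_le_trans zero_less_one le_less) 
      ultimately show "x \<in> {..2*n}" by simp
    qed
  qed simp
  have "1 + n \<in> ?S" using assms by force
  then have ne: "?S \<noteq> {}" by blast
  show "delta n \<in> ?S" unfolding delta_def using fin ne by (rule Min_in)
  show "\<And>x. x \<in> ?S \<Longrightarrow> delta n \<le> x" unfolding delta_def using fin by (rule Min_le)
qed

lemma lt_iff:
  assumes "n \<ge> 1"
  shows "real (delta n) < real n / 4 \<longleftrightarrow> E n"
proof
  assume "real (delta n) < real n / 4"
  then have "4 * delta n < n" by linarith
  with delta_props(1)[OF assms] show "E n" unfolding E_def by auto
next
  assume "E n"
  then obtain r s where "0 < r" "r \<le> s" "r * s = n" "4*(r+s) < n" unfolding E_def by blast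
  then have "r + s \<in> {r + s | r s. 0 < r \<and> 0 < s \<and> r \<le> s \<and> r * s = n}" by fastforce
  then have "delta n \<le> r + s" using delta_props(2)[OF assms] by blast
  then have "4 * delta n \<le> 4*(r+s)" by simp
  with \<open>4*(r+s) < n\<close> have "4 * delta n < n" by linarith
  then have "real (4 * delta n) < real n" by (simp only: of_nat_less_iff)
  then show "real (delta n) < real n / 4" by simp
qed

lemma eq_iff:
  assumes "n \<ge> 1"
  shows "real (delta n) = real n / 4 \<longleftrightarrow>
     (\<exists>r s. 0 < r \<and> r \<le> s \<and> r * s = n \<and> 4*(r+s) = n) \<and> \<not> E n"
proof
  assume h: "real (delta n) = real n / 4"
  then have "4 * delta n = n" by linarith
  with delta_props(1)[OF assms] have "\<exists>r s. 0 < r \<and> r \<le> s \<and> r * s = n \<and> 4*(r+s) = n" by auto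
  moreover have "\<not> E n" using h lt_iff[OF assms] by linarith
  ultimately show "(\<exists>r s. 0 < r \<and> r \<le> s \<and> r * s = n \<and> 4*(r+s) = n) \<and> \<not> E n" by blast
next
  assume h: "(\<exists>r s. 0 < r \<and> r \<le> s \<and> r * s = n \<and> 4*(r+s) = n) \<and> \<not> E n"
  then obtain r s where "0 < r" "r \<le> s" "r * s = n" "4*(r+s) = n" by blast
  then have "r + s \<in> {r + s | r s. 0 < r \<and> 0 < s \<and> r \<le> s \<and> r * s = n}" by fastforce
  then have "delta n \<le> r + s" using delta_props(2)[OF assms] by blast
  moreover have "\<not> real (delta n) < real n / 4" using h lt_iff[OF assms] by blast
  moreover have "4 * delta n \<le> 4*(r+s)" using calculation(1) by simp
  then have "4 * delta n \<le> n" using \<open>4*(r+s) = n\<close> by linarith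
  then have "real (4 * delta n) \<le> real n" by (simp only: of_nat_le_iff)
  ultimately show "real (delta n) = real n / 4" by simp
qed

lemma r_ge5:
  fixes r s :: nat
  assumes "r \<le> s" "4*(r+s) \<le> r*s" "0 < r"
  shows "5 \<le> r"
proof (rule ccontr)
  assume "\<not> 5 \<le> r"
  then have "r \<le> 4" by simp
  then have "r*s \<le> 4*s" using mult_le_mono1[of r 4 s] by blast
  moreover have "4*r + 4*s \<le> r*s" using assms(2) by simp
  ultimately show False using assms by linarith
qed

lemma bound:
  fixes r s :: nat
  assumes "5 \<le> r" "r \<le> s" "r*s \<le> 4*(r+s)"
  shows "r \<le> 8 \<and> r*s \<le> 100"
proof -
  have "r*s \<le> 4*r + 4*s" using assms(3) by simp
  then have "r*s \<le> 8*s" using assms by linarith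
  have r8: "r \<le> 8"
  proof (rule ccontr)
    assume "\<not> r \<le> 8"
    then have "9 \<le> r" by simp
    then have "9*s \<le> r*s" using mult_le_mono1[of 9 r s] by blast
    then show False using \<open>r*s \<le> 8*s\<close> assms by linarith
  qed
  have "r = 5 \<or> r = 6 \<or> r = 7 \<or> r = 8" using r8 assms(1) by linarith
  then show ?thesis using assms by (elim disjE) simp_all
qed

lemma eqcase:
  fixes r s :: nat
  assumes "0 < r" "r \<le> s" "r*s = 4*(r+s)"
  shows "r*s = 64 \<or> r*s = 72 \<or> r*s = 100"
proof -
  have h1: "4*(r+s) \<le> r*s" using assms(3) by simp
  have h2: "r*s \<le> 4*(r+s)" using assms(3) by simp
  have "5 \<le> r" using r_ge5[OF assms(2) h1 assms(1)] .
  then have "r \<le> 8" using bound[OF _ assms(2) h2] by blast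
  then have "r = 5 \<or> r = 6 \<or> r = 7 \<or> r = 8" using \<open>5 \<le> r\<close> by linarith
  moreover have "r \<noteq> 7"
  proof
    assume "r = 7"
    then have "3*s = 28" using assms by simp
    then show False by presburger
  qed
  moreover have "r = 5 \<Longrightarrow> s = 20" using assms by simp
  moreover have "r = 6 \<Longrightarrow> s = 12" using assms by simp
  moreover have "r = 8 \<Longrightarrow> s = 8" using assms by simp
  ultimately show ?thesis by auto
qed

lemma Ps_prime:
  assumes "m \<le> 100"
  shows "Ps m \<longleftrightarrow> prime m"
proof
  assume pm: "prime m"
  have "1 < m" using prime_gt_1_nat[OF pm] .
  moreover have "\<forall>d\<in>set [2..<11]. d < m \<longrightarrow> m mod d \<noteq> 0"
  proof (intro ballI impI notI)
    fix d assume d: "d \<in> set [2..<11]" "d < m" "m mod d = 0"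
    then have "d dvd m" by (simp add: mod_eq_0_iff_dvd)
    then have "d = 1 \<or> d = m" using pm unfolding prime_nat_iff by blast
    moreover have "2 \<le> d" using d(1) unfolding set_upt by simp
    ultimately show False using d(2) by linarith
  qed
  ultimately show "Ps m" unfolding Ps_def list_all_iff by blast
next
  assume h: "Ps m"
  have m1: "1 < m" using h unfolding Ps_def by blast
  have nd0: "\<forall>d\<in>set [2..<11]. d < m \<longrightarrow> m mod d \<noteq> 0" using h unfolding Ps_def list_all_iff by blast
  have nd: "m mod d \<noteq> 0" if "2 \<le> d" "d < 11" "d < m" for d
  proof -
    have "d \<in> set [2..<11]" using that unfolding set_upt by simp
    then show ?thesis using nd0 that(3) by blast
  qed
  show "prime m" unfolding prime_nat_iff
  proof (intro conjI allI impI)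
    show "1 < m" by (rule m1)
    fix d assume "d dvd m"
    show "d = 1 \<or> d = m"
    proof (rule ccontr)
      assume c: "\<not> (d = 1 \<or> d = m)"
      obtain e where me: "m = d * e" using \<open>d dvd m\<close> by blast
      have "d \<noteq> 0"
      proof
        assume "d = 0" then have "m = 0" using me by simp
        then show False using m1 by simp
      qed
      have "e \<noteq> 0"
      proof
        assume "e = 0" then have "m = 0" using me by simp
        then show False using m1 by simp
      qed
      have "e \<noteq> 1"
      proof
        assume "e = 1" then have "m = d" using me by simp
        then show False using c by simp
      qed
      have d2: "2 \<le> d" using \<open>d \<noteq> 0\<close> c by linarith
      have e2: "2 \<le> e" using \<open>e \<noteq> 0\<close> \<open>e \<noteq> 1\<close> by linarith
      have "2 * e \<le> d * e" using mult_le_mono1[OF d2, of e] .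
      then have em: "e < m" using me e2 by linarith
      have "2 * d \<le> e * d" using mult_le_mono1[OF e2, of d] .
      then have "2 * d \<le> m" using me by (simp add: mult.commute)
      then have dm: "d < m" using d2 by linarith
      have "m mod d = 0" using me by simp
      then have d11: "\<not> d < 11" using nd[OF d2 _ dm] by auto
      have "m mod e = 0" using me by simp
      then have e11: "\<not> e < 11" using nd[OF e2 _ em] by auto
      have "11 * 11 \<le> d * e" using mult_le_mono[of 11 d 11 e] d11 e11 by simp
      then show False using me assms by simp
    qed
  qed
qed

lemma Gs_E:
  assumes "n \<le> 100"
  shows "Gs n \<longleftrightarrow> E n"
proof
  assume "Gs n"
  then obtain r where r: "1 \<le> r" "n mod r = 0" "r*r \<le> n" "4*(r + n div r) < n"
    unfolding Gs_def list_ex_iff by auto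
  have "r * (n div r) = n" using r(2) by (simp add: mod_eq_0_iff_dvd)
  moreover have "r \<le> n div r"
  proof -
    have "r*r div r = r" using r(1) by simp
    then show ?thesis using div_le_mono[OF r(3), of r] by simp
  qed
  ultimately have "0 < r \<and> r \<le> n div r \<and> r * (n div r) = n \<and> 4*(r + n div r) < n" using r by simp
  then show "E n" unfolding E_def by blast
next
  assume "E n"
  then obtain r s where rs: "0 < r" "r \<le> s" "r * s = n" "4*(r+s) < n" unfolding E_def by blast
  have rr: "r*r \<le> n" using mult_le_mono2[OF rs(2), of r] rs(3) by simp
  have "r < 11"
  proof (rule ccontr)
    assume "\<not> r < 11"
    then have "11*11 \<le> r*r" using mult_le_mono[of 11 r 11 r] by simp
    then show False using rr assms by simp
  qed
  moreover have "n mod r = 0" "n div r = s" using rs by auto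
  ultimately have mem: "r \<in> set [1..<11]" and c: "n mod r = 0 \<and> r*r \<le> n \<and> 4*(r + n div r) < n"
    using rs rr by auto
  show "Gs n" unfolding Gs_def list_ex_iff by (rule bexI[where x=r]) (use c mem in simp_all)
qed

lemma Ks_iff:
  assumes "n \<le> 100"
  shows "Ks n \<longleftrightarrow> (\<exists>p. prime p \<and> (n = p \<or> n = 2*p \<or> n = 3*p \<or> n = 4*p))"
proof
  assume "Ks n"
  then obtain k where k: "1 \<le> k" "k < 5" "n mod k = 0" "Ps (n div k)"
    unfolding Ks_def list_ex_iff by auto
  have "n div k \<le> 100" using assms by (meson div_le_dividend le_trans)
  then have p: "prime (n div k)" using k Ps_prime by blast
  have nk: "n = k * (n div k)" using k(3) by (simp add: mod_eq_0_iff_dvd)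
  have "k = 1 \<or> k = 2 \<or> k = 3 \<or> k = 4" using k by linarith
  then show "\<exists>p. prime p \<and> (n = p \<or> n = 2*p \<or> n = 3*p \<or> n = 4*p)"
    using p nk by (intro exI[of _ "n div k"]) auto
next
  assume "\<exists>p. prime p \<and> (n = p \<or> n = 2*p \<or> n = 3*p \<or> n = 4*p)"
  then obtain p where p1: "prime p" and dj: "n = p \<or> n = 2*p \<or> n = 3*p \<or> n = 4*p" by blast
  have "\<exists>k. 1 \<le> k \<and> k \<le> 4 \<and> n = k * p"
  proof -
    consider "n = p" | "n = 2*p" | "n = 3*p" | "n = 4*p" using dj by blast
    then show ?thesis
    proof cases
      case 1 then show ?thesis by (intro exI[of _ 1]) simp
    next
      case 2 then show ?thesis by (intro exI[of _ 2]) simp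
    next
      case 3 then show ?thesis by (intro exI[of _ 3]) simp
    next
      case 4 then show ?thesis by (intro exI[of _ 4]) simp
    qed
  qed
  then obtain k where k: "1 \<le> k" "k \<le> 4" "n = k * p" by blast
  have p: "prime p" "n = k * p" using p1 k by simp_all
  have "p \<le> n" using mult_le_mono1[of 1 k p] k by simp
  then have "p \<le> 100" using assms by simp
  then have "Ps p" using p Ps_prime by blast
  moreover have "n mod k = 0" "n div k = p" using k by simp_all
  moreover have "k \<in> set [1..<5]" using k by simp
  ultimately show "Ks n" unfolding Ks_def list_ex_iff by (intro bexI[of _ k]) simp_all
qed

lemma kp_no:
  fixes r s k p :: nat
  assumes "5 \<le> r" "5 \<le> s" "prime p" "r*s = k*p" "k \<le> 4"
  shows False
proof -
  have "p dvd r*s" using assms(4) by simp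
  then have "p dvd r \<or> p dvd s" using assms(3) prime_dvd_mult_iff by blast
  then show False
  proof
    assume "p dvd r"
    then obtain t where "r = p*t" by blast
    then have "p*(t*s) = p*k" using assms(4) by (simp add: algebra_simps)
    then have "t*s = k" using assms(3) by (simp add: prime_gt_0_nat)
    moreover have "t \<ge> 1" using \<open>r = p*t\<close> assms(1) by (cases t) auto
    ultimately have "s \<le> k" using mult_le_mono1[of 1 t s] by simp
    then show False using assms by simp
  next
    assume "p dvd s"
    then obtain t where "s = p*t" by blast
    then have "p*(t*r) = p*k" using assms(4) by (simp add: algebra_simps)
    then have "t*r = k" using assms(3) by (simp add: prime_gt_0_nat)
    moreover have "t \<ge> 1" using \<open>s = p*t\<close> assms(2) by (cases t) auto
    ultimately have "r \<le> k" using mult_le_mono1[of 1 t r] by simp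
    then show False using assms by simp
  qed
qed

lemma fact_E:
  assumes "5 \<le> a" "5 \<le> b" "a*b = n" "100 < n"
  shows "E n"
proof -
  have key: "E n" if "5 \<le> r" "r \<le> s" "r*s = n" for r s
  proof -
    have "4*(r+s) < r*s"
    proof (rule ccontr)
      assume "\<not> 4*(r+s) < r*s"
      then have "r*s \<le> 4*(r+s)" by linarith
      then have "r*s \<le> 100" using bound[OF that(1,2)] by blast
      then show False using that assms by simp
    qed
    then show ?thesis unfolding E_def using that by (intro exI[of _ r] exI[of _ s]) auto
  qed
  show ?thesis
  proof (cases "a \<le> b")
    case True then show ?thesis using key assms by blast
  next
    case False then show ?thesis using key[of b a] assms by (simp add: mult.commute)
  qed
qed

lemma big:
  assumes "100 < n"
  shows "E n \<longleftrightarrow> (\<forall>p. prime p \<longrightarrow> n \<noteq> p \<and> n \<noteq> 2 * p \<and> n \<noteq> 3 * p \<and> n \<noteq> 4 * p)"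
proof
  assume "E n"
  then obtain r s where rs: "0 < r" "r \<le> s" "r * s = n" "4*(r+s) < n" unfolding E_def by blast
  have r5: "5 \<le> r" using r_ge5[of r s] rs by simp
  have s5: "5 \<le> s" using r5 rs by simp
  show "\<forall>p. prime p \<longrightarrow> n \<noteq> p \<and> n \<noteq> 2 * p \<and> n \<noteq> 3 * p \<and> n \<noteq> 4 * p"
  proof (intro allI impI)
    fix p :: nat assume p: "prime p"
    have "\<not> (r*s = k*p)" if "k \<le> 4" for k using kp_no[of r s p k] r5 s5 p that by blast
    from this[of 1] this[of 2] this[of 3] this[of 4]
    show "n \<noteq> p \<and> n \<noteq> 2 * p \<and> n \<noteq> 3 * p \<and> n \<noteq> 4 * p" using rs(3) by auto
  qed
next
  assume conds: "\<forall>p. prime p \<longrightarrow> n \<noteq> p \<and> n \<noteq> 2 * p \<and> n \<noteq> 3 * p \<and> n \<noteq> 4 * p"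
  define d0 where "d0 = (LEAST d. 4 < d \<and> d dvd n)"
  have ex: "4 < n \<and> n dvd n" using assms by simp
  have d0: "4 < d0" "d0 dvd n" using LeastI[of "\<lambda>d. 4 < d \<and> d dvd n", OF ex] d0_def by auto
  have d0min: "d0 \<le> d" if "4 < d" "d dvd n" for d using Least_le[of "\<lambda>d. 4 < d \<and> d dvd n" d] that d0_def by auto
  define k where "k = n div d0"
  have nk: "n = d0 * k" using d0 k_def by simp
  show "E n"
  proof (cases "5 \<le> k")
    case True
    then show ?thesis using fact_E[of d0 k n] d0 nk assms by simp
  next
    case False
    have small: "e \<le> 4" if "e dvd d0" "e \<noteq> d0" for e
    proof (rule ccontr)
      assume "\<not> e \<le> 4"
      then have "4 < e" by simp
      then have "d0 \<le> e" using d0min[OF _ dvd_trans[OF that(1) d0(2)]] by blast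
      moreover have "e \<le> d0" using dvd_imp_le[OF that(1)] d0(1) by simp
      ultimately show False using that by simp
    qed
    have "prime d0" unfolding prime_nat_iff
    proof (intro conjI allI impI)
      show "1 < d0" using d0 by simp
      fix e assume "e dvd d0"
      show "e = 1 \<or> e = d0"
      proof (rule ccontr)
        assume c: "\<not> (e = 1 \<or> e = d0)"
        obtain f where f: "d0 = e * f" using \<open>e dvd d0\<close> by blast
        have "f \<noteq> d0"
        proof
          assume "f = d0"
          then have "e * d0 = 1 * d0" using f by (metis mult.commute mult_1)
          moreover have "d0 \<noteq> 0" using d0(1) by simp
          ultimately have "e = 1" using mult_right_cancel[of d0 e 1] by blast
          then show False using c by simp
        qed
        have e4: "e \<le> 4" using small \<open>e dvd d0\<close> c by blast
        have "f dvd d0" using f by simp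
        then have f4: "f \<le> 4" using small[of f] \<open>f \<noteq> d0\<close> by blast
        have "e * f \<le> 4 * 4" using mult_le_mono[OF e4 f4] .
        then have d16: "d0 \<le> 16" using f by simp
        have k4: "k \<le> 4" using False by simp
        have "d0 * k \<le> 16 * 4" using mult_le_mono[OF d16 k4] .
        then have "n \<le> 16 * 4" using nk by simp
        then show False using assms by simp
      qed
    qed
    have "k \<noteq> 0"
    proof
      assume "k = 0" then have "n = 0" using nk by simp
      then show False using assms by simp
    qed
    then have kc: "k = 1 \<or> k = 2 \<or> k = 3 \<or> k = 4" using False by linarith
    have pk: "n = k * d0" using nk by (simp add: mult.commute)
    have "n \<noteq> d0 \<and> n \<noteq> 2 * d0 \<and> n \<noteq> 3 * d0 \<and> n \<noteq> 4 * d0" using conds \<open>prime d0\<close> by blast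
    then have False using kc pk by auto
    then show ?thesis ..
  qed
qed

theorem proposition3p10:
  fixes n :: nat
  assumes "n \<ge> 1"
  shows "(real (delta n) < real n / 4 \<longleftrightarrow>
            ((\<forall>p. prime p \<longrightarrow> n \<noteq> p \<and> n \<noteq> 2 * p \<and> n \<noteq> 3 * p \<and> n \<noteq> 4 * p) \<and>
             n \<notin> {1,16,18,24,25,27,30,32,35,36,40,42,45,48,49,50,54,55,56,60,63,64,65,66,75,85,95}))
       \<and> (real (delta n) = real n / 4 \<longleftrightarrow> n = 64)"
proof
  show "real (delta n) < real n / 4 \<longleftrightarrow>
            ((\<forall>p. prime p \<longrightarrow> n \<noteq> p \<and> n \<noteq> 2 * p \<and> n \<noteq> 3 * p \<and> n \<noteq> 4 * p) \<and>
             n \<notin> {1,16,18,24,25,27,30,32,35,36,40,42,45,48,49,50,54,55,56,60,63,64,65,66,75,85,95})"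
  proof (cases "n \<le> 100")
    case True
    have "n \<in> set [1..<101]" using True assms unfolding set_upt by simp
    then have c: "Gs n = (\<not> Ks n \<and> n \<notin> {1,16,18,24,25,27,30,32,35,36,40,42,45,48,49,50,54,55,56,60,63,64,65,66,75,85,95})"
      using comp_check unfolding list_all_iff by blast
    show ?thesis unfolding lt_iff[OF assms] Gs_E[OF True, symmetric] c Ks_iff[OF True] by blast
  next
    case False
    then show ?thesis unfolding lt_iff[OF assms] using big[of n] by auto
  qed
next
  have "\<not> Gs 64" unfolding Gs_def by code_simp
  then have nE64: "\<not> E 64" using Gs_E[of 64] by simp
  show "real (delta n) = real n / 4 \<longleftrightarrow> n = 64"
  proof
    assume "real (delta n) = real n / 4"
    then obtain r s where rs: "0 < r" "r \<le> s" "r * s = n" "4*(r+s) = n" and nE: "\<not> E n"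
      using eq_iff[OF assms] by blast
    have "n = 64 \<or> n = 72 \<or> n = 100" using eqcase[of r s] rs by simp
    moreover have "E 72" unfolding E_def by (intro exI[of _ 8] exI[of _ 9]) simp
    moreover have "E 100" unfolding E_def by (intro exI[of _ 10] exI[of _ 10]) simp
    ultimately show "n = 64" using nE by auto
  next
    assume "n = 64"
    have "(\<exists>r s. 0 < r \<and> r \<le> s \<and> r * s = (64::nat) \<and> 4*(r+s) = (64::nat)) \<and> \<not> E 64"
      using nE64 by (intro conjI exI[of _ 8]) simp_all
    then show "real (delta n) = real n / 4" using eq_iff[OF assms] \<open>n = 64\<close> by simp
  qed
qed

end
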